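(* Let $X\subseteq\mathbb{R}^d$ be $\mathcal{A}^\infty$-admissible. If $U$ is an open neighborhood of $X$ in $\mathbb{R}^d$ and $\varphi:U\to\mathbb{R}^e$ is a smooth embedding, then $\varphi(X)\subseteq\mathbb{R}^e$ is $\mathcal{A}^\infty$-admissible.
   Context: For $Y\subseteq\mathbb{R}^n$: $\mathcal{A}^\infty(Y)$ is the set of $f:Y\to\mathbb{R}$ such that $f\circ c$ is smooth for every smooth $c:\mathbb{R}\to\mathbb{R}^n$ with $c(\mathbb{R})\subseteq Y$; $\mathcal{C}^\infty(Y)$ is the set of $f:Y\to\mathbb{R}$ such that each $y\in Y$ has an open neighborhood $V$ in $\mathbb{R}^n$ and a smooth $F:V\to\mathbb{R}$ with $F=f$ on $V\cap Y$. $Y$ is $\mathcal{A}^\infty$-admissible if $\mathcal{A}^\infty(Y)=\mathcal{C}^\infty(Y)$. *)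

theory Defs
  imports "HOL-Analysis.Analysis"
begin

text \<open>Taken as a
  greatest fixed point, this says all iterated partial derivatives exist
  (and are differentiable, hence continuous), i.e. F is C-infinity on V.\<close>
coinductive smooth_on :: "'a::euclidean_space set \<Rightarrow> ('a \<Rightarrow> 'b::real_normed_vector) \<Rightarrow> bool"
  for V :: "'a set" where
  "(\<forall>x\<in>V. F differentiable (at x)) \<Longrightarrow>
   (\<forall>b\<in>Basis. smooth_on V (\<lambda>x. frechet_derivative F (at x) b)) \<Longrightarrow>
   smooth_on V F"

text \<open>A-infinity(Y): functions whose composition with every smooth curve in Y is smooth.
  Functions are total; only their values on Y matter.\<close>
definition A_infty :: "'a::euclidean_space set \<Rightarrow> ('a \<Rightarrow> real) set" where
  "A_infty Y = {f. \<forall>c::real \<Rightarrow> 'a. smooth_on UNIV c \<and> range c \<subseteq> Y \<longrightarrow> smooth_on UNIV (f \<circ> c)}"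

definition C_infty :: "'a::euclidean_space set \<Rightarrow> ('a \<Rightarrow> real) set" where
  "C_infty Y = {f. \<forall>y\<in>Y. \<exists>V (F::'a \<Rightarrow> real). open V \<and> y \<in> V \<and> smooth_on V F \<and>
                     (\<forall>z\<in>V \<inter> Y. F z = f z)}"

definition A_infty_admissible :: "'a::euclidean_space set \<Rightarrow> bool" where
  "A_infty_admissible Y \<longleftrightarrow> A_infty Y = C_infty Y"

definition smooth_embedding :: "'a::euclidean_space set \<Rightarrow> ('a \<Rightarrow> 'b::euclidean_space) \<Rightarrow> bool" where
  "smooth_embedding U \<phi> \<longleftrightarrow> smooth_on U \<phi> \<and>
     (\<forall>x\<in>U. inj (frechet_derivative \<phi> (at x))) \<and>
     (\<exists>\<psi>. homeomorphism U (\<phi> ` U) \<phi> \<psi>)"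

end

theory Submission
  imports Defs
begin
lemma smooth_onD1: "smooth_on V f \<Longrightarrow> x \<in> V \<Longrightarrow> f differentiable (at x)"
  by (erule smooth_on.cases) auto

lemma smooth_onD2: "smooth_on V f \<Longrightarrow> b \<in> Basis \<Longrightarrow> smooth_on V (\<lambda>x. frechet_derivative f (at x) b)"
  by (erule smooth_on.cases) auto

lemma smooth_on_subset:
  assumes "smooth_on V f" "W \<subseteq> V" shows "smooth_on W f"
  using assms(1)
proof (coinduction arbitrary: f rule: smooth_on.coinduct)
  case (smooth_on f)
  then show ?case using assms(2) by (auto intro: smooth_onD1 smooth_onD2)
qed

lemma smooth_on_class:
  assumes V: "open V" and P0: "P f"
  and D: "\<And>f x. P f \<Longrightarrow> x \<in> V \<Longrightarrow> f differentiable at x"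
  and C: "\<And>f b. P f \<Longrightarrow> b \<in> Basis \<Longrightarrow> \<exists>g. P g \<and> (\<forall>x\<in>V. frechet_derivative f (at x) b = g x)"
  shows "smooth_on V f"
proof -
  have "\<exists>g. P g \<and> (\<forall>x\<in>V. f x = g x)" using P0 by auto
  then show ?thesis
  proof (coinduction arbitrary: f rule: smooth_on.coinduct)
    case (smooth_on h)
    then obtain g where g: "P g" "\<forall>x\<in>V. h x = g x" by auto
    have dg: "g differentiable at x" if "x \<in> V" for x using D g that by auto
    have dh: "h differentiable at x" if "x \<in> V" for x
      using dg[OF that] g(2) V that unfolding differentiable_def
      by (metis has_derivative_transform_within_open)
    have eq: "frechet_derivative h (at x) = frechet_derivative g (at x)" if "x \<in> V" for x
      using frechet_derivative_transform_within_open[OF dg[OF that] V that] g(2) that by metis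
    have "\<exists>g'. P g' \<and> (\<forall>x\<in>V. frechet_derivative h (at x) b = g' x)" if "b \<in> Basis" for b
      using C[OF g(1) that] eq by auto
    then show ?case using dh by blast
  qed
qed

lemma pd_eq: "(f has_derivative D) (at x) \<Longrightarrow> frechet_derivative f (at x) v = D v"
  by (drule frechet_derivative_at) simp

lemma has_derivative_sum_list:
  assumes "\<And>g. g \<in> set fs \<Longrightarrow> (g has_derivative D g) F"
  shows "((\<lambda>x. \<Sum>g\<leftarrow>fs. g x) has_derivative (\<lambda>v. \<Sum>g\<leftarrow>fs. D g v)) F"
  using assms by (induction fs) (auto intro!: derivative_eq_intros)

lemma smooth_on_class_sums:
  fixes P :: "('a::euclidean_space \<Rightarrow> 'b::real_normed_vector) \<Rightarrow> bool"
  assumes V: "open V"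
  and D: "\<And>f x. P f \<Longrightarrow> x \<in> V \<Longrightarrow> f differentiable at x"
  and C: "\<And>f b. P f \<Longrightarrow> b \<in> Basis \<Longrightarrow> \<exists>gs. set gs \<subseteq> Collect P \<and> (\<forall>x\<in>V. frechet_derivative f (at x) b = (\<Sum>g\<leftarrow>gs. g x))"
  and fs: "set fs \<subseteq> Collect P"
  shows "smooth_on V (\<lambda>x. \<Sum>g\<leftarrow>fs. g x)"
proof (rule smooth_on_class[OF V, where P = "\<lambda>h. \<exists>fs. set fs \<subseteq> Collect P \<and> h = (\<lambda>x. \<Sum>g\<leftarrow>fs. g x)"])
  show "\<exists>fs'. set fs' \<subseteq> Collect P \<and> (\<lambda>x. \<Sum>g\<leftarrow>fs. g x) = (\<lambda>x. \<Sum>g\<leftarrow>fs'. g x)" using fs by auto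
next
  fix h x assume "\<exists>fs. set fs \<subseteq> Collect P \<and> h = (\<lambda>x. \<Sum>g\<leftarrow>fs. g x)" "x \<in> V"
  then obtain fs where fs: "set fs \<subseteq> Collect P" "h = (\<lambda>x. \<Sum>g\<leftarrow>fs. g x)" by auto
  have "(h has_derivative (\<lambda>v. \<Sum>g\<leftarrow>fs. frechet_derivative g (at x) v)) (at x)"
    unfolding fs(2) using fs(1) D \<open>x \<in> V\<close>
    by (intro has_derivative_sum_list) (auto simp: frechet_derivative_works[symmetric])
  then show "h differentiable at x" unfolding differentiable_def by blast
next
  fix h and b :: 'a assume "\<exists>fs. set fs \<subseteq> Collect P \<and> h = (\<lambda>x. \<Sum>g\<leftarrow>fs. g x)" "b \<in> Basis"
  then obtain fs where fs: "set fs \<subseteq> Collect P" "h = (\<lambda>x. \<Sum>g\<leftarrow>fs. g x)" by auto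
  have "\<exists>gs. set gs \<subseteq> Collect P \<and> (\<forall>x\<in>V. frechet_derivative (\<lambda>x. \<Sum>g\<leftarrow>fs. g x) (at x) b = (\<Sum>g\<leftarrow>gs. g x))"
    using fs(1)
  proof (induction fs)
    case Nil
    then show ?case by (intro exI[of _ "[]"]) simp
  next
    case (Cons f fs)
    then obtain gs where gs: "set gs \<subseteq> Collect P" "\<forall>x\<in>V. frechet_derivative (\<lambda>x. \<Sum>g\<leftarrow>fs. g x) (at x) b = (\<Sum>g\<leftarrow>gs. g x)" by auto
    obtain gs1 where gs1: "set gs1 \<subseteq> Collect P" "\<forall>x\<in>V. frechet_derivative f (at x) b = (\<Sum>g\<leftarrow>gs1. g x)"
      using C[of f b] Cons.prems \<open>b \<in> Basis\<close> by auto
    have "frechet_derivative (\<lambda>x. \<Sum>g\<leftarrow>f # fs. g x) (at x) b = (\<Sum>g\<leftarrow>gs1 @ gs. g x)" if "x \<in> V" for x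
    proof -
      have d1: "f differentiable at x" using D Cons.prems that by auto
      have "((\<lambda>x. \<Sum>g\<leftarrow>fs. g x) has_derivative (\<lambda>v. \<Sum>g\<leftarrow>fs. frechet_derivative g (at x) v)) (at x)"
      proof (rule has_derivative_sum_list)
        fix g assume "g \<in> set fs"
        then have "g differentiable at x" using D Cons.prems that by auto
        then show "(g has_derivative frechet_derivative g (at x)) (at x)" using frechet_derivative_works by blast
      qed
      then have d2: "(\<lambda>x. \<Sum>g\<leftarrow>fs. g x) differentiable at x" unfolding differentiable_def by blast
      have "((\<lambda>x. \<Sum>g\<leftarrow>f # fs. g x) has_derivative
          (\<lambda>v. frechet_derivative f (at x) v + frechet_derivative (\<lambda>x. \<Sum>g\<leftarrow>fs. g x) (at x) v)) (at x)"
        using has_derivative_add[OF d1[unfolded frechet_derivative_works] d2[unfolded frechet_derivative_works]] by simp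
      then have "frechet_derivative (\<lambda>x. \<Sum>g\<leftarrow>f # fs. g x) (at x) b = frechet_derivative f (at x) b + frechet_derivative (\<lambda>x. \<Sum>g\<leftarrow>fs. g x) (at x) b"
        by (rule pd_eq)
      then show ?thesis using gs gs1 that by simp
    qed
    then show ?case using gs gs1 Cons.prems by (intro exI[of _ "gs1 @ gs"]) auto
  qed
  then show "\<exists>g. (\<exists>fs. set fs \<subseteq> Collect P \<and> g = (\<lambda>x. \<Sum>g\<leftarrow>fs. g x)) \<and>
          (\<forall>x\<in>V. frechet_derivative h (at x) b = g x)" unfolding fs(2) by blast
qed

lemma smooth_on_const: "open V \<Longrightarrow> smooth_on V (\<lambda>x. c)"
  by (rule smooth_on_class[where P="\<lambda>f. \<exists>c. f = (\<lambda>x. c)"]) auto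

lemma pd_linear:
  assumes "bounded_linear L" shows "frechet_derivative L (at x) = L"
  using assms by (metis bounded_linear_imp_has_derivative frechet_derivative_at)

lemma smooth_on_linear: "open V \<Longrightarrow> bounded_linear L \<Longrightarrow> smooth_on V L"
  by (rule smooth_on.intros) (auto simp: pd_linear smooth_on_const bounded_linear_imp_differentiable)

lemma smooth_on_postlinear:
  fixes F :: "'a::euclidean_space \<Rightarrow> 'b::real_normed_vector" and L :: "'b \<Rightarrow> 'c::real_normed_vector"
  assumes V: "open V" and L: "bounded_linear L" and F: "smooth_on V F"
  shows "smooth_on V (\<lambda>x. L (F x))"
proof (rule smooth_on_class[OF V, where P="\<lambda>h. \<exists>F. smooth_on V F \<and> h = (\<lambda>x. L (F x))"])
  show "\<exists>G. smooth_on V G \<and> (\<lambda>x. L (F x)) = (\<lambda>x. L (G x))" using F by auto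
next
  fix h x assume "\<exists>F. smooth_on V F \<and> h = (\<lambda>x. L (F x))" "x \<in> V"
  then obtain F where F: "smooth_on V F" "h = (\<lambda>x. L (F x))" by auto
  have "(F has_derivative frechet_derivative F (at x)) (at x)"
    using smooth_onD1[OF F(1) \<open>x \<in> V\<close>] frechet_derivative_works by blast
  from bounded_linear.has_derivative[OF L this]
  show "h differentiable at x" unfolding F(2) differentiable_def by blast
next
  fix h and b :: 'a assume "\<exists>F. smooth_on V F \<and> h = (\<lambda>x. L (F x))" "b \<in> Basis"
  then obtain F where F: "smooth_on V F" "h = (\<lambda>x. L (F x))" by auto
  have "frechet_derivative h (at x) b = L (frechet_derivative F (at x) b)" if "x \<in> V" for x
  proof -
    have "(F has_derivative frechet_derivative F (at x)) (at x)"
      using smooth_onD1[OF F(1) that] frechet_derivative_works by blast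
    from bounded_linear.has_derivative[OF L this]
    have "(h has_derivative (\<lambda>v. L (frechet_derivative F (at x) v))) (at x)" unfolding F(2) .
    then show ?thesis by (rule pd_eq)
  qed
  then show "\<exists>g. (\<exists>F. smooth_on V F \<and> g = (\<lambda>x. L (F x))) \<and> (\<forall>x\<in>V. frechet_derivative h (at x) b = g x)"
    using smooth_onD2[OF F(1) \<open>b \<in> Basis\<close>] by blast
qed

lemma smooth_on_sum_list:
  fixes fs :: "('a::euclidean_space \<Rightarrow> 'b::real_normed_vector) list"
  assumes V: "open V" and fs: "\<And>g. g \<in> set fs \<Longrightarrow> smooth_on V g"
  shows "smooth_on V (\<lambda>x. \<Sum>g\<leftarrow>fs. g x)"
proof (rule smooth_on_class_sums[OF V, where P="smooth_on V"])
  fix f and b :: 'a assume "smooth_on V f" "b \<in> Basis"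
  then show "\<exists>gs. set gs \<subseteq> Collect (smooth_on V) \<and> (\<forall>x\<in>V. frechet_derivative f (at x) b = (\<Sum>g\<leftarrow>gs. g x))"
    by (intro exI[of _ "[\<lambda>x. frechet_derivative f (at x) b]"]) (auto intro: smooth_onD2)
qed (use fs smooth_onD1 in auto)

lemma smooth_on_add:
  assumes "open V" "smooth_on V f" "smooth_on V g"
  shows "smooth_on V (\<lambda>x. f x + g x)"
proof -
  have "smooth_on V (\<lambda>x. \<Sum>g\<leftarrow>[f, g]. g x)" by (rule smooth_on_sum_list) (use assms in auto)
  then show ?thesis by simp
qed

lemma smooth_on_sum:
  assumes V: "open V" and "finite S" and "\<And>i. i \<in> S \<Longrightarrow> smooth_on V (f i)"
  shows "smooth_on V (\<lambda>x. \<Sum>i\<in>S. f i x)"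
  using assms(2,3)
proof (induction S rule: finite_induct)
  case empty
  then show ?case using smooth_on_const[OF V] by simp
next
  case (insert i S)
  then show ?case using smooth_on_add[OF V, of "f i" "\<lambda>x. \<Sum>i\<in>S. f i x"] by simp
qed

lemma smooth_on_scaleR:
  fixes a :: "'a::euclidean_space \<Rightarrow> real" and v :: "'a \<Rightarrow> 'b::real_normed_vector"
  assumes V: "open V" and a: "smooth_on V a" and v: "smooth_on V v"
  shows "smooth_on V (\<lambda>x. a x *\<^sub>R v x)"
proof -
  let ?P = "\<lambda>h. \<exists>a v. smooth_on V a \<and> smooth_on V v \<and> h = (\<lambda>x. a x *\<^sub>R v x)"
  have "smooth_on V (\<lambda>x. \<Sum>g\<leftarrow>[\<lambda>x. a x *\<^sub>R v x]. g x)"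
  proof (rule smooth_on_class_sums[OF V, where P="?P"])
    fix h x assume "?P h" "x \<in> V"
    then obtain a v where av: "smooth_on V a" "smooth_on V v" "h = (\<lambda>x. a x *\<^sub>R v x)" by auto
    have "(h has_derivative (\<lambda>y. a x *\<^sub>R frechet_derivative v (at x) y + frechet_derivative a (at x) y *\<^sub>R v x)) (at x)"
      unfolding av(3) using smooth_onD1[OF av(1) \<open>x\<in>V\<close>] smooth_onD1[OF av(2) \<open>x\<in>V\<close>]
      by (intro has_derivative_scaleR) (simp_all add: frechet_derivative_works[symmetric])
    then show "h differentiable at x" unfolding differentiable_def by blast
  next
    fix h and b :: 'a assume "?P h" "b \<in> Basis"
    then obtain a v where av: "smooth_on V a" "smooth_on V v" "h = (\<lambda>x. a x *\<^sub>R v x)" by auto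
    have "frechet_derivative h (at x) b = frechet_derivative a (at x) b *\<^sub>R v x + a x *\<^sub>R frechet_derivative v (at x) b"
      if "x \<in> V" for x
    proof -
      have "(h has_derivative (\<lambda>y. a x *\<^sub>R frechet_derivative v (at x) y + frechet_derivative a (at x) y *\<^sub>R v x)) (at x)"
        unfolding av(3) using smooth_onD1[OF av(1) that] smooth_onD1[OF av(2) that]
        by (intro has_derivative_scaleR) (simp_all add: frechet_derivative_works[symmetric])
      then show ?thesis by (subst pd_eq) (auto simp: algebra_simps)
    qed
    then show "\<exists>gs. set gs \<subseteq> Collect ?P \<and> (\<forall>x\<in>V. frechet_derivative h (at x) b = (\<Sum>g\<leftarrow>gs. g x))"
      using smooth_onD2[OF av(1) \<open>b\<in>Basis\<close>] smooth_onD2[OF av(2) \<open>b\<in>Basis\<close>] av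
      by (intro exI[of _ "[\<lambda>x. frechet_derivative a (at x) b *\<^sub>R v x, \<lambda>x. a x *\<^sub>R frechet_derivative v (at x) b]"]) auto
  qed (use a v in auto)
  then show ?thesis by simp
qed

lemma smooth_on_mult:
  fixes a b :: "'a::euclidean_space \<Rightarrow> real"
  assumes "open V" "smooth_on V a" "smooth_on V b"
  shows "smooth_on V (\<lambda>x. a x * b x)"
proof -
  have "smooth_on V (\<lambda>x. a x *\<^sub>R b x)" by (rule smooth_on_scaleR[OF assms])
  then show ?thesis by simp
qed

lemma smooth_on_inner_const:
  assumes "open V" "smooth_on V F"
  shows "smooth_on V (\<lambda>x. F x \<bullet> c)"
  using smooth_on_postlinear[OF assms(1) bounded_linear_inner_left assms(2)] .

lemma pd_expand:
  fixes f :: "'a::euclidean_space \<Rightarrow> 'b::real_normed_vector"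
  assumes "f differentiable at y"
  shows "frechet_derivative f (at y) w = (\<Sum>b\<in>Basis. (w \<bullet> b) *\<^sub>R frechet_derivative f (at y) b)"
proof -
  have l: "linear (frechet_derivative f (at y))" using linear_frechet_derivative[OF assms] .
  have "frechet_derivative f (at y) w = frechet_derivative f (at y) (\<Sum>b\<in>Basis. (w \<bullet> b) *\<^sub>R b)"
    by (simp add: euclidean_representation)
  also have "\<dots> = (\<Sum>b\<in>Basis. (w \<bullet> b) *\<^sub>R frechet_derivative f (at y) b)"
    by (simp add: linear_sum[OF l] linear_scale[OF l] o_def)
  finally show ?thesis .
qed

lemma my_scaleR_sum_list: fixes f :: "'x \<Rightarrow> 'b::real_vector" shows "c *\<^sub>R (\<Sum>x\<leftarrow>xs. f x) = (\<Sum>x\<leftarrow>xs. c *\<^sub>R f x)"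
  by (induction xs) (simp_all add: scaleR_add_right)

lemma smooth_on_compose:
  fixes F :: "'a::euclidean_space \<Rightarrow> 'c::euclidean_space" and H :: "'c \<Rightarrow> 'b::real_normed_vector"
  assumes V: "open V" and W: "open W" and H: "smooth_on W H" and F: "smooth_on V F"
    and FVW: "F ` V \<subseteq> W"
  shows "smooth_on V (\<lambda>x. H (F x))"
proof -
  obtain BL where BL: "set BL = (Basis :: 'c set)" "distinct BL"
    using finite_distinct_list[OF finite_Basis] by blast
  let ?P = "\<lambda>h. \<exists>a K. smooth_on V a \<and> smooth_on W K \<and> h = (\<lambda>x. a x *\<^sub>R K (F x))"
  have der: "((\<lambda>x. a x *\<^sub>R K (F x)) has_derivative
       (\<lambda>y. a x *\<^sub>R frechet_derivative K (at (F x)) (frechet_derivative F (at x) y) + frechet_derivative a (at x) y *\<^sub>R K (F x))) (at x)"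
    if "smooth_on V a" "smooth_on W K" "x \<in> V" for a K x
  proof -
    have "F x \<in> W" using FVW that by auto
    have dF: "(F has_derivative frechet_derivative F (at x)) (at x)"
      using smooth_onD1[OF F that(3)] frechet_derivative_works by blast
    have dK: "(K has_derivative frechet_derivative K (at (F x))) (at (F x))"
      using smooth_onD1[OF that(2) \<open>F x \<in> W\<close>] frechet_derivative_works by blast
    have dKF: "((\<lambda>x. K (F x)) has_derivative (\<lambda>y. frechet_derivative K (at (F x)) (frechet_derivative F (at x) y))) (at x)"
      using has_derivative_compose[OF dF dK] .
    have da: "(a has_derivative frechet_derivative a (at x)) (at x)"
      using smooth_onD1[OF that(1) that(3)] frechet_derivative_works by blast
    show ?thesis using has_derivative_scaleR[OF da dKF] .
  qed
  have "smooth_on V (\<lambda>x. \<Sum>g\<leftarrow>[\<lambda>x. 1 *\<^sub>R H (F x)]. g x)"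
  proof (rule smooth_on_class_sums[OF V, where P="?P"])
    fix h x assume "?P h" "x \<in> V"
    then obtain a K where aK: "smooth_on V a" "smooth_on W K" "h = (\<lambda>x. a x *\<^sub>R K (F x))" by auto
    then show "h differentiable at x" using der[OF aK(1,2) \<open>x\<in>V\<close>] unfolding differentiable_def by blast
  next
    fix h and b :: 'a assume "?P h" "b \<in> Basis"
    then obtain a K where aK: "smooth_on V a" "smooth_on W K" "h = (\<lambda>x. a x *\<^sub>R K (F x))" by auto
    let ?gs = "(\<lambda>x. frechet_derivative a (at x) b *\<^sub>R K (F x)) #
       map (\<lambda>b1 x. (a x * (frechet_derivative F (at x) b \<bullet> b1)) *\<^sub>R frechet_derivative K (at (F x)) b1) BL"
    have "frechet_derivative h (at x) b = (\<Sum>g\<leftarrow>?gs. g x)" if "x \<in> V" for x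
    proof -
      have "F x \<in> W" using FVW that by auto
      have "frechet_derivative h (at x) b = a x *\<^sub>R frechet_derivative K (at (F x)) (frechet_derivative F (at x) b) + frechet_derivative a (at x) b *\<^sub>R K (F x)"
        unfolding aK(3) by (rule pd_eq[OF der[OF aK(1,2) that]])
      also have "frechet_derivative K (at (F x)) (frechet_derivative F (at x) b) =
          (\<Sum>b1\<in>Basis. (frechet_derivative F (at x) b \<bullet> b1) *\<^sub>R frechet_derivative K (at (F x)) b1)"
        by (rule pd_expand[OF smooth_onD1[OF aK(2) \<open>F x \<in> W\<close>]])
      also have "\<dots> = (\<Sum>b1\<leftarrow>BL. (frechet_derivative F (at x) b \<bullet> b1) *\<^sub>R frechet_derivative K (at (F x)) b1)"
        using BL sum.distinct_set_conv_list by metis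
      finally show ?thesis
        by (simp add: o_def my_scaleR_sum_list algebra_simps)
    qed
    moreover have "set ?gs \<subseteq> Collect ?P"
    proof -
      have "?P (\<lambda>x. frechet_derivative a (at x) b *\<^sub>R K (F x))"
        using smooth_onD2[OF aK(1) \<open>b\<in>Basis\<close>] aK(2) by blast
      moreover have "?P (\<lambda>x. (a x * (frechet_derivative F (at x) b \<bullet> b1)) *\<^sub>R frechet_derivative K (at (F x)) b1)"
        if "b1 \<in> Basis" for b1
      proof -
        have "smooth_on V (\<lambda>x. a x * (frechet_derivative F (at x) b \<bullet> b1))"
          by (intro smooth_on_mult[OF V aK(1)] smooth_on_inner_const[OF V] smooth_onD2[OF F \<open>b\<in>Basis\<close>])
        then show ?thesis using smooth_onD2[OF aK(2) that] by blast
      qed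
      ultimately show ?thesis using BL by auto
    qed
    ultimately show "\<exists>gs. set gs \<subseteq> Collect ?P \<and> (\<forall>x\<in>V. frechet_derivative h (at x) b = (\<Sum>g\<leftarrow>gs. g x))"
      by blast
  qed (use H smooth_on_const[OF V, of 1] in \<open>auto intro!: exI[of _ "\<lambda>x. 1"] exI[of _ H]\<close>)
  then show ?thesis by simp
qed

lemma smooth_on_continuous_on: "smooth_on V f \<Longrightarrow> continuous_on V f"
  by (intro continuous_at_imp_continuous_on ballI differentiable_imp_continuous_within smooth_onD1)

lemma linv:
  fixes L :: "'n::euclidean_space \<Rightarrow> 'n"
  assumes "linear L" "inj L"
  shows "linear (inv L)" "\<And>z. L (inv L z) = z" "\<And>w. inv L (L w) = w"
proof -
  show "linear (inv L)" using eucl.inj_linear_imp_inv_linear assms .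
  have "surj L" using linear_inj_imp_surj assms by blast
  then show "\<And>z. L (inv L z) = z" by (simp add: surj_f_inv_f)
  show "\<And>w. inv L (L w) = w" using assms(2) by (simp add: inv_f_f)
qed

lemma smooth_on_blinfun_continuous:
  fixes f :: "'a::euclidean_space \<Rightarrow> 'b::real_normed_vector"
  assumes V: "open V" and f: "smooth_on V f"
  shows "continuous_on V (\<lambda>x. Blinfun (frechet_derivative f (at x)))"
proof (rule continuous_on_blinfun_componentwise)
  fix i :: 'a assume i: "i \<in> Basis"
  have "continuous_on V (\<lambda>x. frechet_derivative f (at x) i)"
    using smooth_on_continuous_on[OF smooth_onD2[OF f i]] .
  moreover have "blinfun_apply (Blinfun (frechet_derivative f (at x))) i = frechet_derivative f (at x) i" if "x \<in> V" for x
  proof -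
    have "bounded_linear (frechet_derivative f (at x))"
      using smooth_onD1[OF f that] frechet_derivative_works has_derivative_bounded_linear by blast
    then show ?thesis by (simp add: bounded_linear_Blinfun_apply)
  qed
  ultimately show "continuous_on V (\<lambda>x. blinfun_apply (Blinfun (frechet_derivative f (at x))) i)"
    using continuous_on_cong by (smt (verit))
qed

lemma lin_expand:
  fixes M :: "'n::euclidean_space \<Rightarrow> 'm::real_vector"
  assumes "linear M" shows "M v = (\<Sum>b\<in>Basis. (v \<bullet> b) *\<^sub>R M b)"
proof -
  have "M v = M (\<Sum>b\<in>Basis. (v \<bullet> b) *\<^sub>R b)" by (simp add: euclidean_representation)
  also have "\<dots> = (\<Sum>b\<in>Basis. (v \<bullet> b) *\<^sub>R M b)"
    by (simp add: linear_sum[OF assms] linear_scale[OF assms] o_def)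
  finally show ?thesis .
qed

lemma inv_deriv_entry:
  fixes f :: "'n::euclidean_space \<Rightarrow> 'n"
  assumes U: "open U" and f: "smooth_on U f" and inj: "\<And>x. x \<in> U \<Longrightarrow> inj (frechet_derivative f (at x))"
    and x: "x \<in> U"
  shows "((\<lambda>y. inv (frechet_derivative f (at y)) b) has_derivative
     (\<lambda>c. inv (frechet_derivative f (at x)) (- (\<Sum>b1\<in>Basis. (inv (frechet_derivative f (at x)) b \<bullet> b1) *\<^sub>R
          frechet_derivative (\<lambda>y. frechet_derivative f (at y) b1) (at x) c)))) (at x)"
proof -
  define P where "P b1 y = frechet_derivative f (at y) b1" for b1 y
  define DP where "DP b1 y c = frechet_derivative (P b1) (at y) c" for b1 y c
  define A where "A y = frechet_derivative f (at y)" for y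
  define G where "G p = (fst p, \<Sum>b1\<in>Basis. (snd p \<bullet> b1) *\<^sub>R P b1 (fst p))" for p :: "'n \<times> 'n"
  define Ginv where "Ginv q = (fst q, inv (A (fst q)) (snd q))" for q :: "'n \<times> 'n"
  define S where "S = U \<times> (UNIV :: 'n set)"
  have S: "open S" unfolding S_def using U by (simp add: open_Times)
  have linA: "linear (A y)" if "y \<in> U" for y
    unfolding A_def using linear_frechet_derivative smooth_onD1[OF f that] by blast
  have AP: "A y u = (\<Sum>b1\<in>Basis. (u \<bullet> b1) *\<^sub>R P b1 y)" if "y \<in> U" for y u
    unfolding A_def P_def using pd_expand[OF smooth_onD1[OF f that]] .
  have Ainv1: "A y (inv (A y) z) = z" and Ainv2: "inv (A y) (A y w) = w" and linAi: "linear (inv (A y))"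
    if "y \<in> U" for y z w
    using linv[OF linA[OF that] inj[OF that, folded A_def]] by auto
  have Psm: "smooth_on U (P b1)" if "b1 \<in> Basis" for b1
    unfolding P_def using smooth_onD2[OF f that] .
  have dPb: "(P b1 has_derivative DP b1 y) (at y)" if "b1 \<in> Basis" "y \<in> U" for b1 y
    unfolding DP_def using smooth_onD1[OF Psm[OF that(1)] that(2)] frechet_derivative_works by blast
  define G' where "G' y w q = (fst q, \<Sum>b1\<in>Basis. (snd q \<bullet> b1) *\<^sub>R P b1 y + (w \<bullet> b1) *\<^sub>R DP b1 y (fst q))"
    for y w :: 'n and q :: "'n \<times> 'n"
  have dG: "(G has_derivative G' y w) (at (y, w))" if "y \<in> U" for y w
  proof -
    have "((\<lambda>p. (snd p \<bullet> b1) *\<^sub>R P b1 (fst p)) has_derivative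
        (\<lambda>q. (snd (y,w) \<bullet> b1) *\<^sub>R DP b1 y (fst q) + (snd q \<bullet> b1) *\<^sub>R P b1 (fst (y,w)))) (at (y, w))"
      if "b1 \<in> Basis" for b1
    proof (rule has_derivative_scaleR)
      show "((\<lambda>p. snd p \<bullet> b1) has_derivative (\<lambda>q. snd q \<bullet> b1)) (at (y, w))"
        by (intro bounded_linear_imp_has_derivative bounded_linear_compose[OF bounded_linear_inner_left bounded_linear_snd])
      show "((\<lambda>p. P b1 (fst p)) has_derivative (\<lambda>q. DP b1 y (fst q))) (at (y, w))"
      proof -
        have h1: "((\<lambda>p. fst p) has_derivative (\<lambda>q. fst q)) (at (y, w))"
          by (rule bounded_linear_imp_has_derivative[OF bounded_linear_fst])
        have h2: "(P b1 has_derivative DP b1 y) (at (fst (y, w)))" using dPb[OF that \<open>y \<in> U\<close>] by simp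
        show ?thesis using has_derivative_compose[OF h1 h2] .
      qed
    qed
    then have "((\<lambda>p. \<Sum>b1\<in>Basis. (snd p \<bullet> b1) *\<^sub>R P b1 (fst p)) has_derivative
        (\<lambda>q. \<Sum>b1\<in>Basis. (snd (y,w) \<bullet> b1) *\<^sub>R DP b1 y (fst q) + (snd q \<bullet> b1) *\<^sub>R P b1 (fst (y,w)))) (at (y, w))"
      by (intro has_derivative_sum) auto
    moreover have "((\<lambda>p. fst p) has_derivative (\<lambda>q. fst q)) (at (y, w))"
      by (rule bounded_linear_imp_has_derivative[OF bounded_linear_fst])
    ultimately have "((\<lambda>p. (fst p, \<Sum>b1\<in>Basis. (snd p \<bullet> b1) *\<^sub>R P b1 (fst p))) has_derivative
        (\<lambda>q. (fst q, \<Sum>b1\<in>Basis. (snd (y,w) \<bullet> b1) *\<^sub>R DP b1 y (fst q) + (snd q \<bullet> b1) *\<^sub>R P b1 (fst (y,w))))) (at (y, w))"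
      by (intro has_derivative_Pair)
    then show ?thesis unfolding G_def G'_def by (simp add: add.commute)
  qed
  have contG: "continuous_on S G"
    unfolding S_def using dG
    by (intro continuous_at_imp_continuous_on) (auto dest!: has_derivative_continuous)
  have GinvG: "Ginv (G p) = p" if "p \<in> S" for p
  proof -
    obtain y w where p: "p = (y, w)" "y \<in> U" using \<open>p \<in> S\<close> S_def by (cases p) auto
    show ?thesis unfolding p G_def Ginv_def using AP[OF p(2), symmetric] Ainv2[OF p(2)] by simp
  qed
  define w where "w = inv (A x) b"
  define g' where "g' q = (fst q, inv (A x) (snd q - (\<Sum>b1\<in>Basis. (w \<bullet> b1) *\<^sub>R DP b1 x (fst q))))" for q :: "'n \<times> 'n"
  have id: "G' x w \<circ> g' = id"
  proof
    fix q :: "'n \<times> 'n"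
    let ?u = "inv (A x) (snd q - (\<Sum>b1\<in>Basis. (w \<bullet> b1) *\<^sub>R DP b1 x (fst q)))"
    have "(\<Sum>b1\<in>Basis. (?u \<bullet> b1) *\<^sub>R P b1 x + (w \<bullet> b1) *\<^sub>R DP b1 x (fst q))
        = A x ?u + (\<Sum>b1\<in>Basis. (w \<bullet> b1) *\<^sub>R DP b1 x (fst q))"
      by (simp add: sum.distrib AP[OF x])
    also have "\<dots> = snd q" by (simp add: Ainv1[OF x])
    finally show "(G' x w \<circ> g') q = id q" unfolding G'_def g'_def by (simp add: prod_eq_iff)
  qed
  have Gxw: "G (x, w) = (x, b)" unfolding G_def w_def using AP[OF x, symmetric] Ainv1[OF x] by simp
  have "(Ginv has_derivative g') (at (G (x, w)))"
    by (rule has_derivative_inverse_strong[OF S _ contG GinvG dG[OF x] id]) (use x S_def in auto)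
  then have dGinv: "(Ginv has_derivative g') (at (x, b))" using Gxw by simp
  have "((\<lambda>y. snd (Ginv (y, b))) has_derivative (\<lambda>c. snd (g' (c, 0)))) (at x)"
  proof -
    have "((\<lambda>y. (y, b)) has_derivative (\<lambda>c. (c, 0))) (at x)"
      by (intro has_derivative_Pair has_derivative_ident has_derivative_const)
    from has_derivative_compose[OF this dGinv]
    have "((\<lambda>y. Ginv (y, b)) has_derivative (\<lambda>c. g' (c, 0))) (at x)" .
    from has_derivative_snd[OF this] show ?thesis .
  qed
  then show ?thesis unfolding Ginv_def g'_def w_def A_def DP_def P_def by simp
qed

inductive RC :: "'n::euclidean_space set \<Rightarrow> ('n \<Rightarrow> 'n) \<Rightarrow> ('n \<Rightarrow> real) \<Rightarrow> bool" for U f where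
  sm: "smooth_on U a \<Longrightarrow> RC U f a"
| ent: "b \<in> Basis \<Longrightarrow> b' \<in> Basis \<Longrightarrow> RC U f (\<lambda>x. inv (frechet_derivative f (at x)) b \<bullet> b')"
| add: "RC U f a \<Longrightarrow> RC U f c \<Longrightarrow> RC U f (\<lambda>x. a x + c x)"
| mul: "RC U f a \<Longrightarrow> RC U f c \<Longrightarrow> RC U f (\<lambda>x. a x * c x)"

lemma RC_sum:
  assumes "open U" "finite S" "\<And>i. i \<in> S \<Longrightarrow> RC U f (g i)"
  shows "RC U f (\<lambda>x. \<Sum>i\<in>S. g i x)"
  using assms(2,3)
proof (induction S rule: finite_induct)
  case empty
  then show ?case using RC.sm[OF smooth_on_const[OF assms(1), of 0]] by simp
next
  case (insert i S)
  then show ?case using RC.add[of U f "g i" "\<lambda>x. \<Sum>i\<in>S. g i x"] by simp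
qed

lemma RC_diff:
  fixes f :: "'n::euclidean_space \<Rightarrow> 'n"
  assumes U: "open U" and f: "smooth_on U f" and inj: "\<And>x. x \<in> U \<Longrightarrow> inj (frechet_derivative f (at x))"
  shows "RC U f h \<Longrightarrow> (\<forall>x\<in>U. h differentiable at x) \<and>
     (\<forall>c\<in>Basis. \<exists>g. RC U f g \<and> (\<forall>x\<in>U. frechet_derivative h (at x) c = g x))"
proof (induction rule: RC.induct)
  case (sm a)
  then show ?case using smooth_onD1 smooth_onD2 RC.sm by blast
next
  case (ent b b')
  define e where "e b b' x = inv (frechet_derivative f (at x)) b \<bullet> b'" for b b' :: 'n and x
  define DP where "DP b1 x c = frechet_derivative (\<lambda>y. frechet_derivative f (at y) b1) (at x) c" for b1 x c :: 'n
  have der: "((\<lambda>y. e b b' y) has_derivative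
     (\<lambda>c. inv (frechet_derivative f (at x)) (- (\<Sum>b1\<in>Basis. e b b1 x *\<^sub>R DP b1 x c)) \<bullet> b')) (at x)"
    if "x \<in> U" for x
    unfolding e_def DP_def
    using bounded_linear.has_derivative[OF bounded_linear_inner_left inv_deriv_entry[OF U f inj that]] .
  have lin: "linear (inv (frechet_derivative f (at x)))" if "x \<in> U" for x
    using linv(1)[OF linear_frechet_derivative[OF smooth_onD1[OF f that]] inj[OF that]] .
  have "frechet_derivative (\<lambda>y. e b b' y) (at x) c =
      (\<Sum>b2\<in>Basis. ((-1) * (\<Sum>b1\<in>Basis. e b b1 x * (DP b1 x c \<bullet> b2))) * e b2 b' x)"
    if "x \<in> U" for x c
  proof -
    have "frechet_derivative (\<lambda>y. e b b' y) (at x) c =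
        inv (frechet_derivative f (at x)) (- (\<Sum>b1\<in>Basis. e b b1 x *\<^sub>R DP b1 x c)) \<bullet> b'"
      by (rule pd_eq[OF der[OF that]])
    also have "\<dots> = (\<Sum>b2\<in>Basis. ((- (\<Sum>b1\<in>Basis. e b b1 x *\<^sub>R DP b1 x c)) \<bullet> b2) *\<^sub>R
         inv (frechet_derivative f (at x)) b2) \<bullet> b'"
      by (subst lin_expand[OF lin[OF that]]) rule
    also have "\<dots> = (\<Sum>b2\<in>Basis. ((-1) * (\<Sum>b1\<in>Basis. e b b1 x * (DP b1 x c \<bullet> b2))) * e b2 b' x)"
      by (simp add: inner_sum_left e_def)
    finally show ?thesis .
  qed
  moreover have "RC U f (\<lambda>x. \<Sum>b2\<in>Basis. ((-1) * (\<Sum>b1\<in>Basis. e b b1 x * (DP b1 x c \<bullet> b2))) * e b2 b' x)"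
    if "c \<in> Basis" for c
  proof (rule RC_sum[OF U finite_Basis])
    fix b2 :: 'n assume b2: "b2 \<in> Basis"
    have e2: "RC U f (e b2 b')" unfolding e_def using RC.ent b2 ent by blast
    have s2: "RC U f (\<lambda>x. \<Sum>b1\<in>Basis. e b b1 x * (DP b1 x c \<bullet> b2))"
    proof (rule RC_sum[OF U finite_Basis])
      fix b1 :: 'n assume b1: "b1 \<in> Basis"
      have "RC U f (e b b1)" unfolding e_def using RC.ent b1 ent by blast
      moreover have "RC U f (\<lambda>x. DP b1 x c \<bullet> b2)" unfolding DP_def
        by (intro RC.sm smooth_on_inner_const[OF U] smooth_onD2[OF smooth_onD2[OF f b1] that])
      ultimately show "RC U f (\<lambda>x. e b b1 x * (DP b1 x c \<bullet> b2))" by (rule RC.mul)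
    qed
    have "RC U f (\<lambda>x. -1)" by (rule RC.sm[OF smooth_on_const[OF U]])
    from RC.mul[OF RC.mul[OF this s2] e2]
    show "RC U f (\<lambda>x. ((-1) * (\<Sum>b1\<in>Basis. e b b1 x * (DP b1 x c \<bullet> b2))) * e b2 b' x)" .
  qed
  moreover have "(\<lambda>x. e b b' x) differentiable at x" if "x \<in> U" for x
    using der[OF that] unfolding differentiable_def by blast
  ultimately show ?case unfolding e_def by blast
next
  case (add a c)
  show ?case
  proof (intro conjI ballI)
    fix x assume "x \<in> U"
    then show "(\<lambda>x. a x + c x) differentiable at x" using add.IH by (auto intro: differentiable_add)
  next
    fix d :: 'n assume d: "d \<in> Basis"
    obtain ga where ga: "RC U f ga" "\<forall>x\<in>U. frechet_derivative a (at x) d = ga x" using add.IH d by blast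
    obtain gc where gc: "RC U f gc" "\<forall>x\<in>U. frechet_derivative c (at x) d = gc x" using add.IH d by blast
    have "frechet_derivative (\<lambda>x. a x + c x) (at x) d = ga x + gc x" if "x \<in> U" for x
    proof -
      have "((\<lambda>x. a x + c x) has_derivative (\<lambda>v. frechet_derivative a (at x) v + frechet_derivative c (at x) v)) (at x)"
        using add.IH that by (intro has_derivative_add) (auto simp: frechet_derivative_works[symmetric])
      from pd_eq[OF this, of d] show ?thesis using ga gc that by simp
    qed
    then show "\<exists>g. RC U f g \<and> (\<forall>x\<in>U. frechet_derivative (\<lambda>x. a x + c x) (at x) d = g x)"
      using RC.add[OF ga(1) gc(1)] by blast
  qed
next
  case (mul a c)
  show ?case
  proof (intro conjI ballI)
    fix x assume "x \<in> U"
    then show "(\<lambda>x. a x * c x) differentiable at x" using mul.IH by (auto intro: differentiable_mult)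
  next
    fix d :: 'n assume d: "d \<in> Basis"
    obtain ga where ga: "RC U f ga" "\<forall>x\<in>U. frechet_derivative a (at x) d = ga x" using mul.IH d by blast
    obtain gc where gc: "RC U f gc" "\<forall>x\<in>U. frechet_derivative c (at x) d = gc x" using mul.IH d by blast
    have "frechet_derivative (\<lambda>x. a x * c x) (at x) d = a x * gc x + ga x * c x" if "x \<in> U" for x
    proof -
      have "((\<lambda>x. a x * c x) has_derivative (\<lambda>v. a x * frechet_derivative c (at x) v + frechet_derivative a (at x) v * c x)) (at x)"
        using mul.IH that by (intro has_derivative_mult) (auto simp: frechet_derivative_works[symmetric])
      from pd_eq[OF this, of d] show ?thesis using ga gc that by simp
    qed
    moreover have "RC U f (\<lambda>x. a x * gc x + ga x * c x)"
      using mul.hyps ga gc by (intro RC.add RC.mul) auto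
    ultimately show "\<exists>g. RC U f g \<and> (\<forall>x\<in>U. frechet_derivative (\<lambda>x. a x * c x) (at x) d = g x)"
      by blast
  qed
qed

lemma smooth_on_inv_deriv:
  fixes f :: "'n::euclidean_space \<Rightarrow> 'n"
  assumes U: "open U" and f: "smooth_on U f" and inj: "\<And>x. x \<in> U \<Longrightarrow> inj (frechet_derivative f (at x))"
    and b: "b \<in> Basis"
  shows "smooth_on U (\<lambda>x. inv (frechet_derivative f (at x)) b)"
proof -
  have RCs: "smooth_on U h" if "RC U f h" for h
    using that
    by (rule smooth_on_class[OF U, where P="RC U f"]) (use RC_diff[OF U f inj] in blast)+
  have "smooth_on U (\<lambda>x. \<Sum>b'\<in>Basis. (inv (frechet_derivative f (at x)) b \<bullet> b') *\<^sub>R b')"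
    by (intro smooth_on_sum[OF U] finite_Basis smooth_on_scaleR[OF U] RCs RC.ent b smooth_on_const[OF U])
  then show ?thesis by (simp add: euclidean_representation)
qed

lemma smooth_local_inverse:
  fixes f :: "'n::euclidean_space \<Rightarrow> 'n"
  assumes S: "open S" and f: "smooth_on S f" and x0: "x0 \<in> S" and inj0: "inj (frechet_derivative f (at x0))"
  obtains U' V g where "open U'" "U' \<subseteq> S" "x0 \<in> U'" "open V" "f x0 \<in> V" "homeomorphism U' V f g"
    "smooth_on V g"
proof -
  define f' where "f' x = Blinfun (frechet_derivative f (at x))" for x
  have bl: "bounded_linear (frechet_derivative f (at x))" if "x \<in> S" for x
    using smooth_onD1[OF f that] frechet_derivative_works has_derivative_bounded_linear by blast
  have app: "blinfun_apply (f' x) = frechet_derivative f (at x)" if "x \<in> S" for x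
    unfolding f'_def using bl[OF that] by (simp add: bounded_linear_Blinfun_apply)
  have derf: "(f has_derivative blinfun_apply (f' x)) (at x)" if "x \<in> S" for x
    using app[OF that] smooth_onD1[OF f that] frechet_derivative_works by metis
  have contf: "continuous_on S f'" unfolding f'_def using smooth_on_blinfun_continuous[OF S f] .
  have lin0: "linear (frechet_derivative f (at x0))" using bl[OF x0] bounded_linear.linear by blast
  note li = linv[OF lin0 inj0]
  have blinv: "bounded_linear (inv (frechet_derivative f (at x0)))"
    using li(1) linear_conv_bounded_linear by blast
  have invf: "Blinfun (inv (frechet_derivative f (at x0))) o\<^sub>L f' x0 = id_blinfun"
    by (rule blinfun_eqI) (simp add: app[OF x0] bounded_linear_Blinfun_apply[OF blinv] li(3))
  obtain U' V g g' where U': "open U'" "U' \<subseteq> S" "x0 \<in> U'" "open V" "f x0 \<in> V" "homeomorphism U' V f g"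
    and dg: "\<And>y. y \<in> V \<Longrightarrow> (g has_derivative (g' y)) (at y)"
    and g'eq: "\<And>y. y \<in> V \<Longrightarrow> g' y = inv (blinfun_apply (f'(g y)))"
    and bij: "\<And>y. y \<in> V \<Longrightarrow> bij (blinfun_apply (f'(g y)))"
    using inverse_function_theorem[OF S derf contf x0 invf] by blast
  have hom: "\<And>x. x \<in> U' \<Longrightarrow> g (f x) = x" "\<And>x. x \<in> U' \<Longrightarrow> f x \<in> V"
    "\<And>y. y \<in> V \<Longrightarrow> g y \<in> U'" "\<And>y. y \<in> V \<Longrightarrow> f (g y) = y"
    using U'(6) unfolding homeomorphism_def by auto
  have injU: "inj (frechet_derivative f (at x))" if "x \<in> U'" for x
  proof -
    have "bij (blinfun_apply (f' (g (f x))))" using bij[OF hom(2)[OF that]] .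
    then show ?thesis using hom(1)[OF that] app U'(2) that by (auto simp: bij_def)
  qed
  have fU: "smooth_on U' f" using smooth_on_subset[OF f U'(2)] .
  have Phi: "smooth_on U' (\<lambda>x. inv (frechet_derivative f (at x)) c)" if "c \<in> Basis" for c
    using smooth_on_inv_deriv[OF U'(1) fU injU that] .
  have g'eq2: "g' y = inv (frechet_derivative f (at (g y)))" if "y \<in> V" for y
  proof -
    have "g y \<in> S" using hom(3)[OF that] U'(2) by blast
    then show ?thesis using g'eq[OF that] app by simp
  qed
  have "smooth_on V g"
  proof (rule smooth_on_class[OF U'(4), where P="\<lambda>h. \<exists>K. smooth_on U' K \<and> h = (\<lambda>y. K (g y))"])
    show "\<exists>K. smooth_on U' K \<and> g = (\<lambda>y. K (g y))"
      by (intro exI[of _ "\<lambda>x. x"]) (simp add: smooth_on_linear[OF U'(1) bounded_linear_ident])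
  next
    fix h y assume "\<exists>K. smooth_on U' K \<and> h = (\<lambda>y. K (g y))" "y \<in> V"
    then obtain K where K: "smooth_on U' K" "h = (\<lambda>y. K (g y))" by auto
    have "(K has_derivative frechet_derivative K (at (g y))) (at (g y))"
      using smooth_onD1[OF K(1) hom(3)[OF \<open>y\<in>V\<close>]] frechet_derivative_works by blast
    from has_derivative_compose[OF dg[OF \<open>y\<in>V\<close>] this]
    show "h differentiable at y" unfolding K(2) differentiable_def by blast
  next
    fix h and c :: 'n assume "\<exists>K. smooth_on U' K \<and> h = (\<lambda>y. K (g y))" "c \<in> Basis"
    then obtain K where K: "smooth_on U' K" "h = (\<lambda>y. K (g y))" by auto
    define K' where "K' x = (\<Sum>b1\<in>Basis. (inv (frechet_derivative f (at x)) c \<bullet> b1) *\<^sub>R frechet_derivative K (at x) b1)" for x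
    have "smooth_on U' K'" unfolding K'_def
    proof (rule smooth_on_sum[OF U'(1) finite_Basis])
      fix b1 :: 'n assume "b1 \<in> Basis"
      show "smooth_on U' (\<lambda>x. (inv (frechet_derivative f (at x)) c \<bullet> b1) *\<^sub>R frechet_derivative K (at x) b1)"
        by (rule smooth_on_scaleR[OF U'(1) smooth_on_inner_const[OF U'(1) Phi[OF \<open>c \<in> Basis\<close>]] smooth_onD2[OF K(1) \<open>b1 \<in> Basis\<close>]])
    qed
    moreover have "frechet_derivative h (at y) c = K' (g y)" if "y \<in> V" for y
    proof -
      have dK: "(K has_derivative frechet_derivative K (at (g y))) (at (g y))"
        using smooth_onD1[OF K(1) hom(3)[OF that]] frechet_derivative_works by blast
      have "frechet_derivative h (at y) c = frechet_derivative K (at (g y)) (g' y c)"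
        unfolding K(2) by (rule pd_eq[OF has_derivative_compose[OF dg[OF that] dK]])
      also have "\<dots> = K' (g y)" unfolding K'_def g'eq2[OF that]
        by (rule pd_expand[OF smooth_onD1[OF K(1) hom(3)[OF that]]])
      finally show ?thesis .
    qed
    ultimately show "\<exists>h'. (\<exists>K. smooth_on U' K \<and> h' = (\<lambda>y. K (g y))) \<and> (\<forall>y\<in>V. frechet_derivative h (at y) c = h' y)"
      by blast
  qed
  then show ?thesis using that U' by blast
qed

lemma smooth_on_local:
  assumes "\<And>x. x \<in> V \<Longrightarrow> \<exists>W. open W \<and> x \<in> W \<and> smooth_on W f"
  shows "smooth_on V f"
  using assms
proof (coinduction arbitrary: f rule: smooth_on.coinduct)
  case (smooth_on f)
  have d: "f differentiable at x" if "x \<in> V" for x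
    using smooth_on that smooth_onD1 by blast
  have p: "\<forall>x. x \<in> V \<longrightarrow> (\<exists>W. open W \<and> x \<in> W \<and> smooth_on W (\<lambda>x. frechet_derivative f (at x) b))" if "b \<in> Basis" for b
  proof (intro allI impI)
    fix x assume "x \<in> V"
    then obtain W where W: "open W" "x \<in> W" "smooth_on W f" using smooth_on by meson
    show "\<exists>W. open W \<and> x \<in> W \<and> smooth_on W (\<lambda>x. frechet_derivative f (at x) b)"
      using W smooth_onD2[OF W(3) that] by blast
  qed
  show ?case
    apply (rule exI[of _ f], intro conjI refl ballI)
     apply (erule d)
    apply (rule disjI1, rule exI, rule conjI[OF refl])
    apply (erule p)
    done
qed

lemma smooth_on_cong:
  fixes g :: "'a::euclidean_space \<Rightarrow> 'b::real_normed_vector"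
  assumes V: "open V" and f: "smooth_on V f" and eq: "\<And>x. x \<in> V \<Longrightarrow> f x = g x"
  shows "smooth_on V g"
proof (rule smooth_on_class[OF V, where P="\<lambda>h. \<exists>f. smooth_on V f \<and> (\<forall>x\<in>V. h x = f x)"])
  show "\<exists>f. smooth_on V f \<and> (\<forall>x\<in>V. g x = f x)" using f eq by auto
next
  fix h :: "'a \<Rightarrow> 'b" and x assume "\<exists>f. smooth_on V f \<and> (\<forall>x\<in>V. h x = f x)" "x \<in> V"
  then obtain f where f: "smooth_on V f" "\<forall>x\<in>V. h x = f x" by auto
  have "(f has_derivative frechet_derivative f (at x)) (at x)"
    using smooth_onD1[OF f(1) \<open>x\<in>V\<close>] frechet_derivative_works by blast
  then have "(h has_derivative frechet_derivative f (at x)) (at x)"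
    by (rule has_derivative_transform_within_open[OF _ V \<open>x\<in>V\<close>]) (use f(2) in auto)
  then show "h differentiable at x" unfolding differentiable_def by blast
next
  fix h :: "'a \<Rightarrow> 'b" and b :: 'a assume "\<exists>f. smooth_on V f \<and> (\<forall>x\<in>V. h x = f x)" "b \<in> Basis"
  then obtain f where f: "smooth_on V f" "\<forall>x\<in>V. h x = f x" by auto
  have "frechet_derivative h (at x) b = frechet_derivative f (at x) b" if "x \<in> V" for x
    using frechet_derivative_transform_within_open[OF smooth_onD1[OF f(1) that] V that, of h] f(2) by simp
  then show "\<exists>g. (\<exists>f. smooth_on V f \<and> (\<forall>x\<in>V. g x = f x)) \<and> (\<forall>x\<in>V. frechet_derivative h (at x) b = g x)"
    using smooth_onD2[OF f(1) \<open>b\<in>Basis\<close>] by (intro exI[of _ "\<lambda>x. frechet_derivative f (at x) b"]) auto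
qed

lemma smooth_on_imp_continuous: "smooth_on UNIV c \<Longrightarrow> continuous_on UNIV c"
  by (rule smooth_on_continuous_on)

lemma C_sub_A: "C_infty Y \<subseteq> A_infty Y"
proof
  fix f assume f: "f \<in> C_infty Y"
  show "f \<in> A_infty Y" unfolding A_infty_def
  proof (intro CollectI allI impI, elim conjE)
    fix c :: "real \<Rightarrow> 'a" assume c: "smooth_on UNIV c" "range c \<subseteq> Y"
    have "smooth_on UNIV (\<lambda>t. f (c t))"
    proof (rule smooth_on_local)
      fix t :: real
      have "c t \<in> Y" using c(2) by auto
      then obtain V F where VF: "open V" "c t \<in> V" "smooth_on V F" "\<forall>z\<in>V \<inter> Y. F z = f z"
        using f unfolding C_infty_def by blast
      define T where "T = c -` V"
      have T: "open T" unfolding T_def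
        using continuous_on_open_vimage[OF open_UNIV] smooth_on_continuous_on[OF c(1)] VF(1) by auto
      have "smooth_on T (\<lambda>t. F (c t))"
        by (rule smooth_on_compose[OF T VF(1) VF(3) smooth_on_subset[OF c(1)]]) (auto simp: T_def)
      moreover have "\<And>s. s \<in> T \<Longrightarrow> F (c s) = f (c s)" using VF(4) c(2) T_def by auto
      ultimately have "smooth_on T (\<lambda>t. f (c t))" by (rule smooth_on_cong[OF T])
      then show "\<exists>W. open W \<and> t \<in> W \<and> smooth_on W (\<lambda>t. f (c t))" using T VF(2) T_def by blast
    qed
    then show "smooth_on UNIV (f \<circ> c)" by (simp add: o_def)
  qed
qed

definition adj :: "('a::euclidean_space \<Rightarrow> 'b::euclidean_space) \<Rightarrow> 'b \<Rightarrow> 'a" where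
  "adj L z = (\<Sum>a\<in>Basis. (z \<bullet> L a) *\<^sub>R a)"

lemma bounded_linear_adj: "bounded_linear (adj L)"
  unfolding adj_def
  by (intro bounded_linear_sum bounded_linear_compose[OF bounded_linear_scaleR_left bounded_linear_inner_left])

lemma adj_inj:
  fixes L :: "'a::euclidean_space \<Rightarrow> 'b::euclidean_space"
  assumes "linear L" "inj L" "adj L (L u) = 0"
  shows "u = 0"
proof -
  have "u \<bullet> adj L (L u) = (\<Sum>a\<in>Basis. (L u \<bullet> L a) * (u \<bullet> a))"
    unfolding adj_def by (simp add: inner_sum_right)
  also have "\<dots> = L u \<bullet> (\<Sum>a\<in>Basis. (u \<bullet> a) *\<^sub>R L a)"
    by (simp add: inner_sum_right mult.commute)
  also have "\<dots> = L u \<bullet> L u" using lin_expand[OF assms(1), of u] by simp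
  finally have "L u = 0" using assms(3) by simp
  then have "L u = L 0" using linear_0[OF assms(1)] by simp
  then show ?thesis using assms(2) by (simp add: inj_eq)
qed

lemma local_left_inverse:
  fixes \<phi> :: "'a::euclidean_space \<Rightarrow> 'b::euclidean_space"
  assumes U: "open U" and \<phi>: "smooth_on U \<phi>" and x: "x \<in> U" and inj: "inj (frechet_derivative \<phi> (at x))"
  obtains Ob D \<psi>' where "open Ob" "x \<in> Ob" "Ob \<subseteq> U" "open D" "smooth_on D \<psi>'"
    "\<And>u. u \<in> Ob \<Longrightarrow> \<phi> u \<in> D \<and> \<psi>' (\<phi> u) = u"
proof -
  define L where "L = frechet_derivative \<phi> (at x)"
  have d\<phi>: "(\<phi> has_derivative L) (at x)" unfolding L_def
    using smooth_onD1[OF \<phi> x] frechet_derivative_works by blast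
  have linL: "linear L" using has_derivative_linear[OF d\<phi>] .
  have injL: "inj L" using inj unfolding L_def .
  define \<Theta> where "\<Theta> p = (adj L (snd p), \<phi> (fst p) + snd p)" for p :: "'a \<times> 'b"
  define S where "S = U \<times> (UNIV :: 'b set)"
  have S: "open S" unfolding S_def using U by (simp add: open_Times)
  have s1: "smooth_on S (\<lambda>p. \<phi> (fst p))"
    by (rule smooth_on_compose[OF S U \<phi> smooth_on_linear[OF S bounded_linear_fst]]) (auto simp: S_def)
  have s2: "smooth_on S (\<lambda>p. \<phi> (fst p) + snd p)"
    by (rule smooth_on_add[OF S s1 smooth_on_linear[OF S bounded_linear_snd]])
  have s3: "smooth_on S (\<lambda>p. (adj L (snd p), 0::'b))"
    by (rule smooth_on_linear[OF S])
      (intro bounded_linear_Pair bounded_linear_compose[OF bounded_linear_adj bounded_linear_snd] bounded_linear_zero)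
  have s4: "smooth_on S (\<lambda>p. (0::'a, \<phi> (fst p) + snd p))"
    by (rule smooth_on_postlinear[OF S _ s2]) (intro bounded_linear_Pair bounded_linear_zero bounded_linear_ident)
  have \<Theta>sm: "smooth_on S \<Theta>"
    using smooth_on_add[OF S s3 s4] by (simp add: \<Theta>_def[abs_def])
  define \<Theta>' where "\<Theta>' q = (adj L (snd q), L (fst q) + snd q)" for q :: "'a \<times> 'b"
  have d\<Theta>: "(\<Theta> has_derivative \<Theta>') (at (x, 0))"
  proof -
    have h1: "((\<lambda>p. adj L (snd p)) has_derivative (\<lambda>q. adj L (snd q))) (at (x, 0))"
      by (intro bounded_linear_imp_has_derivative bounded_linear_compose[OF bounded_linear_adj bounded_linear_snd])
    have hf: "((\<lambda>p. fst p) has_derivative (\<lambda>q. fst q)) (at (x, 0::'b))"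
      by (rule bounded_linear_imp_has_derivative[OF bounded_linear_fst])
    have d\<phi>': "(\<phi> has_derivative L) (at (fst (x, 0::'b)))" using d\<phi> by simp
    have h2: "((\<lambda>p. \<phi> (fst p)) has_derivative (\<lambda>q. L (fst q))) (at (x, 0::'b))"
      using has_derivative_compose[OF hf d\<phi>'] .
    have h3: "((\<lambda>p. snd p) has_derivative (\<lambda>q. snd q)) (at (x, 0::'b))"
      by (rule bounded_linear_imp_has_derivative[OF bounded_linear_snd])
    show ?thesis unfolding \<Theta>_def \<Theta>'_def
      by (rule has_derivative_Pair[OF h1 has_derivative_add[OF h2 h3]])
  qed
  have injT: "inj (frechet_derivative \<Theta> (at (x, 0)))"
  proof -
    have "frechet_derivative \<Theta> (at (x, 0)) = \<Theta>'" using frechet_derivative_at[OF d\<Theta>] by simp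
    moreover have "inj \<Theta>'"
    proof (rule injI)
      fix p q assume eq: "\<Theta>' p = \<Theta>' q"
      define du where "du = fst p - fst q"
      define dz where "dz = snd p - snd q"
      have la: "linear (adj L)" using bounded_linear_adj bounded_linear.linear by blast
      have "adj L (snd p) = adj L (snd q)" "L (fst p) + snd p = L (fst q) + snd q"
        using eq unfolding \<Theta>'_def by auto
      then have e1: "adj L dz = 0" and e2: "L du + dz = 0"
        unfolding du_def dz_def by (simp_all add: linear_diff[OF la] linear_diff[OF linL] algebra_simps)
      have "dz = - L du" using e2 by (simp add: eq_neg_iff_add_eq_0 add.commute)
      then have "adj L (L du) = 0" using e1 linear_neg[OF la] by (metis neg_equal_0_iff_equal)
      then have "du = 0" using adj_inj[OF linL injL] by blast
      then have "dz = 0" using \<open>dz = - L du\<close> linear_0[OF linL] by simp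
      then show "p = q" using \<open>du = 0\<close> unfolding du_def dz_def by (simp add: prod_eq_iff)
    qed
    ultimately show ?thesis by simp
  qed
  have x0: "(x, 0) \<in> S" using x S_def by auto
  obtain U' N \<Gamma> where U': "open U'" "U' \<subseteq> S" "(x, 0) \<in> U'" "open N" "\<Theta> (x, 0) \<in> N"
      "homeomorphism U' N \<Theta> \<Gamma>" "smooth_on N \<Gamma>"
    using smooth_local_inverse[OF S \<Theta>sm x0 injT] by blast
  define D where "D = {y::'b. ((0::'a), y) \<in> N}"
  have blP: "bounded_linear (\<lambda>y::'b. ((0::'a), y))"
    by (intro bounded_linear_Pair bounded_linear_zero bounded_linear_ident)
  have D: "open D"
  proof -
    have "continuous_on UNIV (\<lambda>y::'b. ((0::'a), y))" by (intro continuous_intros)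
    then have "open ((\<lambda>y::'b. ((0::'a), y)) -` N \<inter> UNIV)"
      using continuous_on_open_vimage[OF open_UNIV] U'(4) by blast
    then show ?thesis unfolding D_def by (simp add: vimage_def)
  qed
  define \<psi>' where "\<psi>' y = fst (\<Gamma> (0, y))" for y
  have "smooth_on D (\<lambda>y. \<Gamma> (0, y))"
    by (rule smooth_on_compose[OF D U'(4) U'(7) smooth_on_linear[OF D blP]]) (auto simp: D_def)
  then have \<psi>sm: "smooth_on D \<psi>'" unfolding \<psi>'_def by (rule smooth_on_postlinear[OF D bounded_linear_fst])
  define Ob where "Ob = {u \<in> U. (u, 0::'b) \<in> U'}"
  have Ob: "open Ob"
  proof -
    have "continuous_on UNIV (\<lambda>u::'a. (u, 0::'b))" by (intro continuous_intros)
    then have "open ((\<lambda>u::'a. (u, 0::'b)) -` U' \<inter> UNIV)"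
      using continuous_on_open_vimage[OF open_UNIV] U'(1) by blast
    then have "open (U \<inter> ((\<lambda>u::'a. (u, 0::'b)) -` U'))" using U by auto
    then show ?thesis unfolding Ob_def by (simp add: vimage_def Int_def)
  qed
  have adj0: "adj L 0 = 0" using linear_0[OF bounded_linear.linear[OF bounded_linear_adj]] .
  have "\<phi> u \<in> D \<and> \<psi>' (\<phi> u) = u" if "u \<in> Ob" for u
  proof -
    have u: "(u, 0) \<in> U'" using that Ob_def by auto
    have T: "\<Theta> (u, 0) = (0, \<phi> u)" unfolding \<Theta>_def by (simp add: adj0)
    have "\<Theta> (u, 0) \<in> N" "\<Gamma> (\<Theta> (u, 0)) = (u, 0)"
      using U'(6) u unfolding homeomorphism_def by auto
    then show ?thesis unfolding T D_def \<psi>'_def by simp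
  qed
  moreover have "x \<in> Ob" using x U'(3) Ob_def by auto
  moreover have "Ob \<subseteq> U" using Ob_def by auto
  ultimately show ?thesis using that Ob D \<psi>sm by blast
qed

theorem proposition1p20:
  fixes X U :: "'a::euclidean_space set" and \<phi> :: "'a \<Rightarrow> 'b::euclidean_space"
  assumes "A_infty_admissible X"
    and "open U" and "X \<subseteq> U"
    and "smooth_embedding U \<phi>"
  shows "A_infty_admissible (\<phi> ` X)"
proof -
  have adm: "A_infty X = C_infty X" using assms(1) unfolding A_infty_admissible_def .
  have U: "open U" and XU: "X \<subseteq> U" by fact+
  have \<phi>: "smooth_on U \<phi>" and inj: "\<And>x. x \<in> U \<Longrightarrow> inj (frechet_derivative \<phi> (at x))"
    using assms(4) unfolding smooth_embedding_def by auto
  obtain \<psi> where hom: "homeomorphism U (\<phi> ` U) \<phi> \<psi>"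
    using assms(4) unfolding smooth_embedding_def by auto
  have \<psi>\<phi>: "\<And>u. u \<in> U \<Longrightarrow> \<psi> (\<phi> u) = u" using hom unfolding homeomorphism_def by auto
  have "A_infty (\<phi> ` X) \<subseteq> C_infty (\<phi> ` X)"
  proof
    fix g assume g: "g \<in> A_infty (\<phi> ` X)"
    have "g \<circ> \<phi> \<in> A_infty X" unfolding A_infty_def
    proof (intro CollectI allI impI, elim conjE)
      fix c :: "real \<Rightarrow> 'a" assume c: "smooth_on UNIV c" "range c \<subseteq> X"
      have "smooth_on UNIV (\<lambda>t. \<phi> (c t))"
        by (rule smooth_on_compose[OF open_UNIV U \<phi> c(1)]) (use c(2) XU in auto)
      moreover have "range (\<lambda>t. \<phi> (c t)) \<subseteq> \<phi> ` X" using c(2) by auto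
      ultimately have "smooth_on UNIV (g \<circ> (\<lambda>t. \<phi> (c t)))" using g unfolding A_infty_def by blast
      then show "smooth_on UNIV (g \<circ> \<phi> \<circ> c)" by (simp add: o_def)
    qed
    then have gC: "g \<circ> \<phi> \<in> C_infty X" using adm by simp
    show "g \<in> C_infty (\<phi> ` X)" unfolding C_infty_def
    proof (intro CollectI ballI)
      fix y assume "y \<in> \<phi> ` X"
      then obtain x where x: "x \<in> X" "y = \<phi> x" by auto
      have xU: "x \<in> U" using x XU by auto
      obtain V F where VF: "open V" "x \<in> V" "smooth_on V F" "\<forall>z\<in>V \<inter> X. F z = (g \<circ> \<phi>) z"
        using gC x(1) unfolding C_infty_def by blast
      obtain Ob D \<psi>' where Ob: "open Ob" "x \<in> Ob" "Ob \<subseteq> U" "open D" "smooth_on D \<psi>'"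
        "\<And>u. u \<in> Ob \<Longrightarrow> \<phi> u \<in> D \<and> \<psi>' (\<phi> u) = u"
        using local_left_inverse[OF U \<phi> xU inj[OF xU]] by blast
      define O' where "O' = Ob \<inter> V"
      have O': "open O'" "x \<in> O'" "O' \<subseteq> U" using Ob VF O'_def by auto
      have "openin (top_of_set U) O'" unfolding openin_open using O' by (intro exI[of _ O']) auto
      then have "openin (top_of_set (\<phi> ` U)) (\<phi> ` O')" using homeomorphism_imp_open_map[OF hom] by blast
      then obtain W1 where W1: "open W1" "\<phi> ` O' = \<phi> ` U \<inter> W1" unfolding openin_open by blast
      have cont: "continuous_on D \<psi>'" using smooth_on_continuous_on[OF Ob(5)] .
      define W where "W = W1 \<inter> (\<psi>' -` V \<inter> D)"
      have "open (\<psi>' -` V \<inter> D)" using iffD1[OF continuous_on_open_vimage[OF Ob(4)] cont] VF(1) by blast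
      then have W: "open W" unfolding W_def using W1(1) by (rule open_Int[rotated])
      have sG: "smooth_on W (\<lambda>z. F (\<psi>' z))"
        by (rule smooth_on_compose[OF W VF(1) VF(3) smooth_on_subset[OF Ob(5)]]) (auto simp: W_def)
      have yW: "y \<in> W"
      proof -
        have "y \<in> \<phi> ` O'" using x O' by auto
        then have "y \<in> W1" using W1 by auto
        moreover have "\<phi> x \<in> D" "\<psi>' (\<phi> x) = x" using Ob(6)[OF Ob(2)] by auto
        ultimately show ?thesis unfolding W_def using x VF(2) by auto
      qed
      have eq: "F (\<psi>' z) = g z" if z: "z \<in> W \<inter> \<phi> ` X" for z
      proof -
        obtain x' where x': "x' \<in> X" "z = \<phi> x'" using z by auto
        have "z \<in> \<phi> ` O'" using z W1(2) x' XU unfolding W_def by auto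
        then obtain x'' where x'': "x'' \<in> O'" "z = \<phi> x''" by auto
        have inU: "x' \<in> U" "x'' \<in> U" using x' x'' XU O'(3) by auto
        have "x' = x''" using \<psi>\<phi>[OF inU(1)] \<psi>\<phi>[OF inU(2)] x'(2) x''(2) by metis
        then have "\<psi>' z = x'" using Ob(6)[of x''] x'' O'_def by auto
        moreover have "x' \<in> V" using \<open>x' = x''\<close> x'' O'_def by auto
        ultimately show ?thesis using VF(4) x' by auto
      qed
      show "\<exists>V F. open V \<and> y \<in> V \<and> smooth_on V F \<and> (\<forall>z\<in>V \<inter> \<phi> ` X. F z = g z)"
        using W yW sG eq by blast
    qed
  qed
  moreover have "C_infty (\<phi> ` X) \<subseteq> A_infty (\<phi> ` X)" by (rule C_sub_A)
  ultimately show ?thesis unfolding A_infty_admissible_def by blast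
qed

end
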